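(* Let $G$ be a $g$-barrelled convergence group and $H$ a locally compact convergence group. Then every compact subset of $\Gamma_s(G,\Gamma_c H)$ is equicontinuous, i.e. equicontinuous as a subset of $\Gamma(G,\Gamma_c H)$.
   Context: All groups are abelian. A convergence structure on a set $X$ assigns to each $x$ a collection of filters converging to $x$. This assignment must satisfy three conditions: point ultrafilters converge to their point; finite intersections of filters converging to $x$ converge to $x$; and finer filters of convergent filters converge. A map is continuous if it sends filters converging to $x$ to filters converging to the image of $x$. A convergence group is an abelian group with a convergence structure such that $\mathcal F\to x$, $\mathcal G\to y$ imply $\mathcal F-\mathcal G\to x-y$. A convergence space is Hausdorff if every filter has at most one limit. A subset $K$ is compact if every ultrafilter containing $K$ converges to a point of $K$. A convergence space is locally compact if it is Hausdorff and each convergent filter contains a compact set. $\mathbb T=\mathbb R/\mathbb Z$. For convergence groups $G,L$, $\Gamma(G,L)$ is the group of continuous homomorphisms $G\to L$. $\Gamma_s(G,L)$ is $\Gamma(G,L)$ with the initial topology (or convergence structure) of pointwise convergence. $\Gamma_c(G,L)$ is $\Gamma(G,L)$ with the continuous convergence structure: $\Phi\to\varphi$ iff for every $\mathcal F\to x$ in $G$, the filter generated by $\{\{\psi(y):\psi\in A,y\in F\}:A\in\Phi,F\in\mathcal F\}$ converges to $\varphi(x)$ in $L$. Write $\Gamma_c H=\Gamma_c(H,\mathbb T)$ and $\Gamma_s G=\Gamma_s(G,\mathbb T)$. A set $M\subseteq\Gamma(G,L)$ is equicontinuous if for every filter $\mathcal F\to0$ in $G$, the filter $M(\mathcal F)$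 generated by the sets $\{\varphi(x):\varphi\in M,x\in F\}$, $F\in\mathcal F$, converges to $0$ in $L$. A convergence group $G$ is $g$-barrelled if every compact subset of $\Gamma_s G$ is equicontinuous. *)

theory Defs
  imports Complex_Main "HOL-Library.Function_Algebras"
begin

definition int_diff :: "real \<Rightarrow> real \<Rightarrow> bool" where
  "int_diff x y \<longleftrightarrow> x - y \<in> \<int>"

lemma equivp_int_diff: "equivp int_diff"
proof (rule equivpI)
  show "reflp int_diff" by (rule reflpI) (simp add: int_diff_def)
  show "symp int_diff"
    by (rule sympI) (metis Ints_minus int_diff_def minus_diff_eq)
  show "transp int_diff"
  proof (rule transpI)
    fix x y z assume "int_diff x y" "int_diff y z"
    then have "(x - y) + (y - z) \<in> \<int>" unfolding int_diff_def by (rule Ints_add)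
    then show "int_diff x z" by (simp add: int_diff_def)
  qed
qed

quotient_type torus = real / int_diff
  by (rule equivp_int_diff)

instantiation torus :: ab_group_add
begin

lift_definition zero_torus :: torus is "0::real" .

lift_definition plus_torus :: "torus \<Rightarrow> torus \<Rightarrow> torus" is "(+)"
proof -
  fix a b c d :: real assume "int_diff a b" "int_diff c d"
  then have "(a - b) + (c - d) \<in> \<int>" unfolding int_diff_def by (rule Ints_add)
  then show "int_diff (a + c) (b + d)" by (simp add: int_diff_def algebra_simps)
qed

lift_definition uminus_torus :: "torus \<Rightarrow> torus" is uminus
proof -
  fix a b :: real assume "int_diff a b"
  then have "- (a - b) \<in> \<int>" unfolding int_diff_def by (rule Ints_minus)
  then show "int_diff (- a) (- b)" by (simp add: int_diff_def)
qed

lift_definition minus_torus :: "torus \<Rightarrow> torus \<Rightarrow> torus" is "(-)"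
proof -
  fix a b c d :: real assume "int_diff a b" "int_diff c d"
  then have "(a - b) - (c - d) \<in> \<int>" unfolding int_diff_def by (rule Ints_diff)
  then show "int_diff (a - c) (b - d)" by (simp add: int_diff_def algebra_simps)
qed

instance
  by standard (transfer, simp add: int_diff_def algebra_simps)+

end

text \<open>The embedding of T onto the unit circle, x + Z \<mapsto> exp(2 pi i x); it is a
  homeomorphism onto the unit circle and defines the usual topology of T.\<close>

lift_definition torus_emb :: "torus \<Rightarrow> complex" is "\<lambda>x. cis (2 * pi * x)"
proof -
  fix a b :: real assume "int_diff a b"
  then have "cis (2 * pi * (a - b)) = 1" by (simp add: int_diff_def)
  then have "cis (2 * pi * (a - b)) * cis (2 * pi * b) = cis (2 * pi * b)" by simp
  then show "cis (2 * pi * a) = cis (2 * pi * b)" by (simp add: cis_mult algebra_simps)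
qed

definition conv_T :: "torus filter \<Rightarrow> torus \<Rightarrow> bool" where
  "conv_T F x \<longleftrightarrow> filterlim torus_emb (nhds (torus_emb x)) F"

text \<open>A convergence structure on a carrier set S (inside an ambient type) is a relation
  c F x ("F converges to x"). The intersection of two
  filters is sup F G in Isabelle's filter order (where F \<le> G means F is finer than G).
  Note: the improper filter bot is finer than every filter, hence converges to every
  point of S; this is a harmless convention (the paper only considers proper filters).\<close>

definition conv_space :: "'a set \<Rightarrow> ('a filter \<Rightarrow> 'a \<Rightarrow> bool) \<Rightarrow> bool" where
  "conv_space S c \<longleftrightarrow>
     (\<forall>F x. c F x \<longrightarrow> x \<in> S \<and> F \<le> principal S) \<and>
     (\<forall>x\<in>S. c (principal {x}) x) \<and>
     (\<forall>F G x. c F x \<longrightarrow> c G x \<longrightarrow> c (sup F G) x) \<and>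
     (\<forall>F G x. c F x \<longrightarrow> G \<le> F \<longrightarrow> c G x)"

definition filter_diff :: "'a::ab_group_add filter \<Rightarrow> 'a filter \<Rightarrow> 'a filter" where
  "filter_diff F G = filtermap (\<lambda>(a, b). a - b) (F \<times>\<^sub>F G)"

definition conv_group :: "'a::ab_group_add set \<Rightarrow> ('a filter \<Rightarrow> 'a \<Rightarrow> bool) \<Rightarrow> bool" where
  "conv_group S c \<longleftrightarrow> conv_space S c \<and> 0 \<in> S \<and> (\<forall>x\<in>S. \<forall>y\<in>S. x - y \<in> S) \<and>
     (\<forall>F G x y. c F x \<longrightarrow> c G y \<longrightarrow> c (filter_diff F G) (x - y))"

definition ultrafilter :: "'a filter \<Rightarrow> bool" where
  "ultrafilter U \<longleftrightarrow> U \<noteq> bot \<and> (\<forall>P. eventually P U \<or> eventually (\<lambda>x. \<not> P x) U)"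

definition conv_hausdorff :: "('a filter \<Rightarrow> 'a \<Rightarrow> bool) \<Rightarrow> bool" where
  "conv_hausdorff c \<longleftrightarrow> (\<forall>F x y. F \<noteq> bot \<longrightarrow> c F x \<longrightarrow> c F y \<longrightarrow> x = y)"

definition conv_compact :: "'a set \<Rightarrow> ('a filter \<Rightarrow> 'a \<Rightarrow> bool) \<Rightarrow> 'a set \<Rightarrow> bool" where
  "conv_compact S c K \<longleftrightarrow> K \<subseteq> S \<and>
     (\<forall>U. ultrafilter U \<longrightarrow> U \<le> principal K \<longrightarrow> (\<exists>x\<in>K. c U x))"

definition locally_compact_conv :: "'a set \<Rightarrow> ('a filter \<Rightarrow> 'a \<Rightarrow> bool) \<Rightarrow> bool" where
  "locally_compact_conv S c \<longleftrightarrow> conv_hausdorff c \<and>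
     (\<forall>F x. c F x \<longrightarrow> (\<exists>K. conv_compact S c K \<and> eventually (\<lambda>y. y \<in> K) F))"

text \<open>The domain group G is a whole type (carrier UNIV) with convergence cG; the codomain
  L has carrier SL (inside an ambient type) and convergence cL.\<close>

definition Gamma :: "('g::ab_group_add filter \<Rightarrow> 'g \<Rightarrow> bool) \<Rightarrow>
    ('l::ab_group_add filter \<Rightarrow> 'l \<Rightarrow> bool) \<Rightarrow> ('g \<Rightarrow> 'l) set" where
  "Gamma cG cL = {\<phi>. (\<forall>x y. \<phi> (x + y) = \<phi> x + \<phi> y) \<and>
                      (\<forall>F x. cG F x \<longrightarrow> cL (filtermap \<phi> F) (\<phi> x))}"

definition conv_s :: "('g::ab_group_add filter \<Rightarrow> 'g \<Rightarrow> bool) \<Rightarrow>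
    ('l::ab_group_add filter \<Rightarrow> 'l \<Rightarrow> bool) \<Rightarrow> ('g \<Rightarrow> 'l) filter \<Rightarrow> ('g \<Rightarrow> 'l) \<Rightarrow> bool" where
  "conv_s cG cL \<Phi> \<phi> \<longleftrightarrow> \<phi> \<in> Gamma cG cL \<and> \<Phi> \<le> principal (Gamma cG cL) \<and>
     (\<forall>x. cL (filtermap (\<lambda>\<psi>. \<psi> x) \<Phi>) (\<phi> x))"

definition eval_filter :: "('g \<Rightarrow> 'l) filter \<Rightarrow> 'g filter \<Rightarrow> 'l filter" where
  "eval_filter \<Phi> F = filtermap (\<lambda>(\<psi>, y). \<psi> y) (\<Phi> \<times>\<^sub>F F)"

definition conv_c :: "('g::ab_group_add filter \<Rightarrow> 'g \<Rightarrow> bool) \<Rightarrow>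
    ('l::ab_group_add filter \<Rightarrow> 'l \<Rightarrow> bool) \<Rightarrow> ('g \<Rightarrow> 'l) filter \<Rightarrow> ('g \<Rightarrow> 'l) \<Rightarrow> bool" where
  "conv_c cG cL \<Phi> \<phi> \<longleftrightarrow> \<phi> \<in> Gamma cG cL \<and> \<Phi> \<le> principal (Gamma cG cL) \<and>
     (\<forall>F x. cG F x \<longrightarrow> cL (eval_filter \<Phi> F) (\<phi> x))"

definition equicontinuous :: "('g::ab_group_add filter \<Rightarrow> 'g \<Rightarrow> bool) \<Rightarrow>
    ('l::ab_group_add filter \<Rightarrow> 'l \<Rightarrow> bool) \<Rightarrow> ('g \<Rightarrow> 'l) set \<Rightarrow> bool" where
  "equicontinuous cG cL M \<longleftrightarrow> M \<subseteq> Gamma cG cL \<and>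
     (\<forall>F. cG F 0 \<longrightarrow> cL (eval_filter (principal M) F) 0)"

text \<open>Gamma_c H = Gamma_c(H, T): carrier Gamma cH conv_T, convergence conv_c cH conv_T.\<close>

definition g_barrelled :: "('g::ab_group_add filter \<Rightarrow> 'g \<Rightarrow> bool) \<Rightarrow> bool" where
  "g_barrelled cG \<longleftrightarrow> (\<forall>K. conv_compact (Gamma cG conv_T) (conv_s cG conv_T) K \<longrightarrow>
                                equicontinuous cG conv_T K)"

end

theory Submission
  imports Defs
begin

lemma ultrafilter_exists:
  fixes F :: "'a filter"
  assumes "F \<noteq> bot"
  shows "\<exists>U. ultrafilter U \<and> U \<le> F"
proof -
  define A where "A = {{P. eventually P G} | G. G \<le> F \<and> G \<noteq> bot}"
  have "\<forall>C\<in>chains A. \<exists>U\<in>A. \<forall>X\<in>C. X \<subseteq> U"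
  proof
    fix C assume C: "C \<in> chains A"
    show "\<exists>U\<in>A. \<forall>X\<in>C. X \<subseteq> U"
    proof (cases "C = {}")
      case True
      then show ?thesis using assms unfolding A_def by blast
    next
      case False
      define Gs where "Gs = {G. G \<le> F \<and> G \<noteq> bot \<and> {P. eventually P G} \<in> C}"
      have CA: "C \<subseteq> A" using C chainsD2 by blast
      have Gsne: "Gs \<noteq> {}" using False CA unfolding A_def Gs_def by blast
      have base: "\<exists>x\<in>Gs. x \<le> inf a b" if "a \<in> Gs" "b \<in> Gs" for a b
      proof -
        have "{P. eventually P a} \<subseteq> {P. eventually P b} \<or> {P. eventually P b} \<subseteq> {P. eventually P a}"
          using chainsD[OF C] that unfolding Gs_def by blast
        then have "b \<le> a \<or> a \<le> b" unfolding le_filter_def by blast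
        then show ?thesis using that by (metis inf.absorb_iff2 inf.orderE order_refl)
      qed
      have ev: "eventually P (Inf Gs) \<longleftrightarrow> (\<exists>b\<in>Gs. eventually P b)" for P
        by (rule eventually_Inf_base[OF Gsne base])
      have "Inf Gs \<noteq> bot"
      proof
        assume h: "Inf Gs = bot"
        have "eventually (\<lambda>_. False) (Inf Gs)" unfolding h by (rule eventually_bot)
        then obtain b where b: "b \<in> Gs" "eventually (\<lambda>_. False) b"
          using ev[of "\<lambda>_. False"] by blast
        from b(2) have "b = bot" using eventually_False by blast
        with b(1) show False unfolding Gs_def by blast
      qed
      moreover have "Inf Gs \<le> F"
      proof -
        from Gsne obtain G where G: "G \<in> Gs" by blast
        then have "Inf Gs \<le> G" by (rule Inf_lower)
        also have "G \<le> F" using G unfolding Gs_def by blast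
        finally show ?thesis .
      qed
      ultimately have "{P. eventually P (Inf Gs)} \<in> A" unfolding A_def by blast
      moreover have "\<forall>X\<in>C. X \<subseteq> {P. eventually P (Inf Gs)}"
      proof
        fix X assume X: "X \<in> C"
        then obtain G where G: "X = {P. eventually P G}" "G \<le> F" "G \<noteq> bot" using CA unfolding A_def by blast
        then have "G \<in> Gs" using X unfolding Gs_def by blast
        then show "X \<subseteq> {P. eventually P (Inf Gs)}" using G ev by blast
      qed
      ultimately show ?thesis by blast
    qed
  qed
  then obtain M where M: "M \<in> A" "\<forall>X\<in>A. M \<subseteq> X \<longrightarrow> X = M" using Zorn_Lemma2 by blast
  then obtain G where G: "M = {P. eventually P G}" "G \<le> F" "G \<noteq> bot" unfolding A_def by blast
  have "ultrafilter G"
    unfolding ultrafilter_def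
  proof (intro conjI allI G(3))
    fix P
    show "eventually P G \<or> eventually (\<lambda>x. \<not> P x) G"
    proof (rule ccontr)
      assume nn: "\<not> (eventually P G \<or> eventually (\<lambda>x. \<not> P x) G)"
      define G' where "G' = inf G (principal {x. P x})"
      have evG': "eventually Q G' \<longleftrightarrow> eventually (\<lambda>x. P x \<longrightarrow> Q x) G" for Q
        unfolding G'_def by (simp add: eventually_inf_principal)
      have "G' \<noteq> bot"
      proof
        assume "G' = bot"
        then have "eventually (\<lambda>_. False) G'" by simp
        then show False using nn evG' by simp
      qed
      moreover have "G' \<le> F" using G(2) unfolding G'_def by (meson inf.coboundedI1)
      ultimately have "{Q. eventually Q G'} \<in> A" unfolding A_def by blast
      moreover have "M \<subseteq> {Q. eventually Q G'}" using G(1) unfolding G'_def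
        by (auto intro: eventually_mono simp: eventually_inf_principal)
      ultimately have "{Q. eventually Q G'} = M" using M(2) by blast
      moreover have "P \<in> {Q. eventually Q G'}" using evG' by simp
      ultimately show False using G(1) nn by blast
    qed
  qed
  then show ?thesis using G by blast
qed

lemma ultrafilter_map: "ultrafilter W \<Longrightarrow> ultrafilter (filtermap f W)"
  unfolding ultrafilter_def by (simp add: eventually_filtermap filtermap_bot_iff)

lemma ultrafilter_le:
  assumes "ultrafilter U" "V \<le> U" "V \<noteq> bot" shows "U \<le> V"
  unfolding le_filter_def
proof (intro allI impI)
  fix P assume P: "eventually P V"
  show "eventually P U"
  proof (rule ccontr)
    assume "\<not> eventually P U"
    then have "eventually (\<lambda>x. \<not> P x) U" using assms(1) unfolding ultrafilter_def by blast
    then have "eventually (\<lambda>x. \<not> P x) V" using assms(2) unfolding le_filter_def by blast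
    then have "eventually (\<lambda>_. False) V" using P by (auto elim: eventually_elim2)
    then show False using assms(3) by simp
  qed
qed

lemma conv_T_mono: "conv_T F x \<Longrightarrow> G \<le> F \<Longrightarrow> conv_T G x"
  unfolding conv_T_def using filterlim_mono by blast

lemma eval_point: "eval_filter (filtermap \<phi> F) (principal {y}) = filtermap (\<lambda>x. \<phi> x y) F"
  unfolding eval_filter_def prod_filter_principal_singleton2
  by (simp add: filtermap_filtermap)

lemma Gamma_point:
  assumes "\<phi> \<in> Gamma cG (conv_c cH conv_T)" "conv_space UNIV cH"
  shows "(\<lambda>x. \<phi> x y) \<in> Gamma cG conv_T"
proof -
  have add: "\<phi> (x + x') = \<phi> x + \<phi> x'" for x x' using assms(1) unfolding Gamma_def by blast
  have y: "cH (principal {y}) y" using assms(2) unfolding conv_space_def by blast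
  show ?thesis unfolding Gamma_def
  proof (intro CollectI conjI allI impI)
    fix x x' show "\<phi> (x + x') y = \<phi> x y + \<phi> x' y" by (simp add: add)
  next
    fix F x assume "cG F x"
    then have "conv_c cH conv_T (filtermap \<phi> F) (\<phi> x)" using assms(1) unfolding Gamma_def by blast
    then have "conv_T (eval_filter (filtermap \<phi> F) (principal {y})) (\<phi> x y)"
      unfolding conv_c_def using y by blast
    then show "conv_T (filtermap (\<lambda>x. \<phi> x y) F) (\<phi> x y)" by (simp add: eval_point)
  qed
qed

lemma Gamma_value:
  assumes "\<phi> \<in> Gamma cG (conv_c cH conv_T)" "conv_space UNIV cG"
  shows "\<phi> x \<in> Gamma cH conv_T"
proof -
  have "cG (principal {x}) x" using assms(2) unfolding conv_space_def by blast
  then have "conv_c cH conv_T (filtermap \<phi> (principal {x})) (\<phi> x)" using assms(1) unfolding Gamma_def by blast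
  then show ?thesis unfolding conv_c_def by blast
qed

lemma Mset_compact:
  fixes cG :: "'g::ab_group_add filter \<Rightarrow> 'g \<Rightarrow> bool"
    and cH :: "'h::ab_group_add filter \<Rightarrow> 'h \<Rightarrow> bool"
    and K :: "('g \<Rightarrow> 'h \<Rightarrow> torus) set"
  assumes sH: "conv_space UNIV cH"
    and Kc: "conv_compact (Gamma cG (conv_c cH conv_T)) (conv_s cG (conv_c cH conv_T)) K"
    and Cc: "conv_compact UNIV cH C"
  shows "conv_compact (Gamma cG conv_T) (conv_s cG conv_T) ((\<lambda>p x. fst p x (snd p)) ` (K \<times> C))"
proof -
  define \<Phi> :: "('g \<Rightarrow> 'h \<Rightarrow> torus) \<times> 'h \<Rightarrow> 'g \<Rightarrow> torus" where "\<Phi> = (\<lambda>p x. fst p x (snd p))"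
  define M where "M = \<Phi> ` (K \<times> C)"
  have KG: "K \<subseteq> Gamma cG (conv_c cH conv_T)" using Kc unfolding conv_compact_def by blast
  have MG: "M \<subseteq> Gamma cG conv_T"
  proof
    fix m assume "m \<in> M"
    then obtain a b where ab: "a \<in> K" "m = (\<lambda>x. a x b)" unfolding M_def \<Phi>_def by auto
    have "a \<in> Gamma cG (conv_c cH conv_T)" using ab(1) KG by blast
    then show "m \<in> Gamma cG conv_T" unfolding ab(2) by (rule Gamma_point[OF _ sH])
  qed
  have "conv_compact (Gamma cG conv_T) (conv_s cG conv_T) M"
    unfolding conv_compact_def
  proof (intro conjI allI impI MG)
    fix U assume U: "ultrafilter U" "U \<le> principal M"
    define W0 where "W0 = inf (filtercomap \<Phi> U) (principal (K \<times> C))"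
    have "W0 \<noteq> bot"
    proof
      assume "W0 = bot"
      then have "eventually (\<lambda>_. False) W0" by simp
      then obtain A where A: "eventually A U" "\<forall>p\<in>K \<times> C. A (\<Phi> p) \<longrightarrow> False"
        unfolding W0_def eventually_inf_principal eventually_filtercomap by auto
      have "eventually (\<lambda>z. z \<in> M) U" using U(2) by (simp add: le_principal)
      then have "eventually (\<lambda>_. False) U" using A(1)
        by (rule eventually_elim2) (use A(2) M_def in auto)
      then show False using U(1) unfolding ultrafilter_def by simp
    qed
    then obtain W where W: "ultrafilter W" "W \<le> W0" using ultrafilter_exists by blast
    have WKC: "W \<le> principal (K \<times> C)" using W(2) unfolding W0_def by (meson inf.boundedE)
    have "filtermap \<Phi> W \<le> U"
    proof -
      have "filtermap \<Phi> W \<le> filtermap \<Phi> (filtercomap \<Phi> U)"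
        using W(2) unfolding W0_def by (meson filtermap_mono inf.boundedE)
      also have "\<dots> \<le> U" by (rule filtermap_filtercomap)
      finally show ?thesis .
    qed
    moreover have "filtermap \<Phi> W \<noteq> bot" using W(1) unfolding ultrafilter_def by (simp add: filtermap_bot_iff)
    ultimately have UW: "U \<le> filtermap \<Phi> W" using ultrafilter_le[OF U(1)] by blast
    have u1: "ultrafilter (filtermap fst W)" and u2: "ultrafilter (filtermap snd W)"
      using ultrafilter_map[OF W(1)] by blast+
    have "filtermap fst W \<le> principal K" using WKC
      by (auto simp: le_principal eventually_filtermap elim!: eventually_mono)
    then obtain \<phi>0 where \<phi>0: "\<phi>0 \<in> K" "conv_s cG (conv_c cH conv_T) (filtermap fst W) \<phi>0"
      using Kc u1 unfolding conv_compact_def by blast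
    have "filtermap snd W \<le> principal C" using WKC
      by (auto simp: le_principal eventually_filtermap elim!: eventually_mono)
    then obtain y0 where y0: "y0 \<in> C" "cH (filtermap snd W) y0"
      using Cc u2 unfolding conv_compact_def by blast
    have inM: "(\<lambda>x. \<phi>0 x y0) \<in> M" unfolding M_def \<Phi>_def using \<phi>0(1) y0(1) by force
    have "conv_s cG conv_T U (\<lambda>x. \<phi>0 x y0)"
      unfolding conv_s_def
    proof (intro conjI allI)
      show "(\<lambda>x. \<phi>0 x y0) \<in> Gamma cG conv_T" using inM MG by blast
      show "U \<le> principal (Gamma cG conv_T)" using U(2) MG unfolding le_principal by (auto elim!: eventually_mono)
    next
      fix x
      have "conv_c cH conv_T (filtermap (\<lambda>\<psi>. \<psi> x) (filtermap fst W)) (\<phi>0 x)"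
        using \<phi>0(2) unfolding conv_s_def by blast
      then have cT: "conv_T (eval_filter (filtermap (\<lambda>\<psi>. \<psi> x) (filtermap fst W)) (filtermap snd W)) (\<phi>0 x y0)"
        using y0(2) unfolding conv_c_def by blast
      have "filtermap (\<lambda>\<psi>. \<psi> x) U \<le> filtermap (\<lambda>\<psi>. \<psi> x) (filtermap \<Phi> W)"
        using UW by (rule filtermap_mono)
      also have "\<dots> \<le> eval_filter (filtermap (\<lambda>\<psi>. \<psi> x) (filtermap fst W)) (filtermap snd W)"
        unfolding le_filter_def
      proof (intro allI impI)
        fix P assume "eventually P (eval_filter (filtermap (\<lambda>\<psi>. \<psi> x) (filtermap fst W)) (filtermap snd W))"
        then obtain Pf Pg where P: "eventually Pf (filtermap (\<lambda>\<psi>. \<psi> x) (filtermap fst W))"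
          "eventually Pg (filtermap snd W)" "\<forall>a b. Pf a \<longrightarrow> Pg b \<longrightarrow> P (a b)"
          unfolding eval_filter_def eventually_filtermap eventually_prod_filter by auto
        have "eventually (\<lambda>p. Pf (fst p x) \<and> Pg (snd p)) W"
          using P(1,2) unfolding eventually_filtermap by (auto intro: eventually_conj)
        then show "eventually P (filtermap (\<lambda>\<psi>. \<psi> x) (filtermap \<Phi> W))"
          unfolding eventually_filtermap \<Phi>_def using P(3) by (auto elim!: eventually_mono)
      qed
      finally show "conv_T (filtermap (\<lambda>\<psi>. \<psi> x) U) (\<phi>0 x y0)" using cT conv_T_mono by blast
    qed
    then show "\<exists>x\<in>M. conv_s cG conv_T U x" using inM by blast
  qed
  then show ?thesis unfolding M_def \<Phi>_def .
qed

theorem theorem2p14: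
  fixes cG :: "'g::ab_group_add filter \<Rightarrow> 'g \<Rightarrow> bool"
    and cH :: "'h::ab_group_add filter \<Rightarrow> 'h \<Rightarrow> bool"
    and K :: "('g \<Rightarrow> 'h \<Rightarrow> torus) set"
  assumes "conv_group UNIV cG" and "g_barrelled cG"
    and "conv_group UNIV cH" and "locally_compact_conv UNIV cH"
    and "conv_compact (Gamma cG (conv_c cH conv_T)) (conv_s cG (conv_c cH conv_T)) K"
  shows "equicontinuous cG (conv_c cH conv_T) K"
proof -
  have sG: "conv_space UNIV cG" using assms(1) unfolding conv_group_def by blast
  have sH: "conv_space UNIV cH" using assms(3) unfolding conv_group_def by blast
  have KG: "K \<subseteq> Gamma cG (conv_c cH conv_T)" using assms(5) unfolding conv_compact_def by blast
  show ?thesis unfolding equicontinuous_def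
  proof (intro conjI allI impI KG)
    fix F assume F0: "cG F 0"
    show "conv_c cH conv_T (eval_filter (principal K) F) 0"
      unfolding conv_c_def
    proof (intro conjI allI impI)
      show "(0 :: 'h \<Rightarrow> torus) \<in> Gamma cH conv_T"
        unfolding Gamma_def conv_T_def by (simp add: filterlim_filtermap)
      show "eval_filter (principal K) F \<le> principal (Gamma cH conv_T)"
        unfolding eval_filter_def le_principal eventually_filtermap eventually_prod_filter
      proof (intro exI[of _ "\<lambda>\<phi>. \<phi> \<in> K"] exI[of _ "\<lambda>_. True"] conjI allI impI)
        show "eventually (\<lambda>\<phi>. \<phi> \<in> K) (principal K)" by (simp add: eventually_principal)
        show "eventually (\<lambda>_. True) F" by simp
      next
        fix a b assume "a \<in> K"
        then have "a \<in> Gamma cG (conv_c cH conv_T)" using KG by blast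
        then show "(case (a, b) of (\<psi>, y) \<Rightarrow> \<psi> y) \<in> Gamma cH conv_T"
          using Gamma_value[OF _ sG] by simp
      qed
    next
      fix \<H> h assume Hh: "cH \<H> h"
      then obtain C where C: "conv_compact UNIV cH C" "eventually (\<lambda>y. y \<in> C) \<H>"
        using assms(4) unfolding locally_compact_conv_def by blast
      define M where "M = (\<lambda>p x. fst p x (snd p)) ` (K \<times> C)"
      have "conv_compact (Gamma cG conv_T) (conv_s cG conv_T) M"
        unfolding M_def by (rule Mset_compact[OF sH assms(5) C(1)])
      then have "equicontinuous cG conv_T M" using assms(2) unfolding g_barrelled_def by blast
      then have cT: "conv_T (eval_filter (principal M) F) 0" using F0 unfolding equicontinuous_def by blast
      have "eval_filter (eval_filter (principal K) F) \<H> \<le> eval_filter (principal M) F"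
        unfolding le_filter_def
      proof (intro allI impI)
        fix P assume "eventually P (eval_filter (principal M) F)"
        then obtain Pf Pg where P: "eventually Pf (principal M)" "eventually Pg F"
          "\<forall>a b. Pf a \<longrightarrow> Pg b \<longrightarrow> P (a b)"
          unfolding eval_filter_def eventually_filtermap eventually_prod_filter by auto
        have PM: "\<forall>m\<in>M. Pf m" using P(1) by (simp add: eventually_principal)
        have e1: "eventually (\<lambda>\<psi>. \<forall>y\<in>C. P (\<psi> y)) (eval_filter (principal K) F)"
          unfolding eval_filter_def eventually_filtermap eventually_prod_filter
        proof (intro exI[of _ "\<lambda>\<phi>. \<phi> \<in> K"] exI[of _ Pg] conjI allI impI)
          show "eventually (\<lambda>\<phi>. \<phi> \<in> K) (principal K)" by (simp add: eventually_principal)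
          show "eventually Pg F" by (rule P(2))
        qed (use PM P(3) M_def in force)
        show "eventually P (eval_filter (eval_filter (principal K) F) \<H>)"
          unfolding eval_filter_def[of _ \<H>] eventually_filtermap eventually_prod_filter
          using e1 C(2) by (intro exI[of _ "\<lambda>\<psi>. \<forall>y\<in>C. P (\<psi> y)"] exI[of _ "\<lambda>y. y \<in> C"]) auto
      qed
      then show "conv_T (eval_filter (eval_filter (principal K) F) \<H>) ((0 :: 'h \<Rightarrow> torus) h)"
        using cT conv_T_mono by simp
    qed
  qed
qed

end
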